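(* Let $\mathbb{K}\in\{\mathbb{R},\mathbb{C}\}$. Suppose $U=[U_1\ \cdots\ U_M]$, where each $U_i$ is a submatrix whose columns come from $S_i$, with $S_1,\dots,S_M$ independent subspaces of $\mathbb{K}^m$, and the columns of $U_i$ are generic for $S_i$. Suppose $P\in\mathbb{K}^{r\times m}$ with $r\ge\operatorname{rank}(U)$ is a row selection matrix such that $\operatorname{rank}(PU)=\operatorname{rank}(U)$. Then the subspaces $P(S_1),\dots,P(S_M)$ are independent.
   Context: Subspaces $S_1,\dots,S_M$ are independent if $\dim(S_1+\dots+S_M)=\dim S_1+\dots+\dim S_M$ (and this is at most the ambient dimension). A set of vectors from a $d$-dimensional subspace $S$ is generic if it has more than $d$ elements and every $d$ of them form a basis of $S$. A row selection matrix is a matrix whose rows are distinct standard basis row vectors, so that $PU$ consists of a subset of the rows of $U$. *)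

theory Defs
  imports "HOL-Analysis.Analysis"
begin

text \<open>Linear algebra over an arbitrary field 'k on 'k^'m, using the
  vector-space structure vec (scalar multiplication *s), so that for
  'k = complex spans/dimensions are complex ones.\<close>

definition indep_subspaces :: "nat \<Rightarrow> (nat \<Rightarrow> (('k::field)^'m) set) \<Rightarrow> bool" where
  "indep_subspaces M S \<longleftrightarrow>
     vec.dim (vec.span (\<Union>i<M. S i)) = (\<Sum>i<M. vec.dim (S i))"

definition generic_for :: "(('k::field)^'m) set \<Rightarrow> ('j \<Rightarrow> 'k^'m) \<Rightarrow> 'j set \<Rightarrow> bool" where
  "generic_for S f J \<longleftrightarrow> finite J \<and> card J > vec.dim S \<and>
     (\<forall>K\<subseteq>J. card K = vec.dim S \<longrightarrow>
        inj_on f K \<and> vec.independent (f ` K) \<and> vec.span (f ` K) = S)"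

definition row_selection :: "('k::field)^'m^'r \<Rightarrow> bool" where
  "row_selection P \<longleftrightarrow> (\<exists>\<sigma>::'r \<Rightarrow> 'm. inj \<sigma> \<and> (\<forall>i. P $ i = axis (\<sigma> i) 1))"

text \<open>The statement of the lemma for a fixed scalar field 'k.
  U is m x n; column j of U belongs to block blk j < M (block U_i = columns j
  with blk j = i), S i are subspaces of 'k^'m.\<close>
definition lemma3_claim :: "'k::field itself \<Rightarrow> 'm::finite itself \<Rightarrow> 'n::finite itself
    \<Rightarrow> 'r::finite itself \<Rightarrow> bool" where
  "lemma3_claim _ _ _ _ \<longleftrightarrow>
    (\<forall>(M::nat) (S :: nat \<Rightarrow> ('k^'m) set) (U :: 'k^'n^'m) (blk :: 'n \<Rightarrow> nat) (P :: 'k^'m^'r).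
       (\<forall>i<M. vec.subspace (S i)) \<longrightarrow>
       indep_subspaces M S \<longrightarrow>
       (\<forall>j. blk j < M) \<longrightarrow>
       (\<forall>j. column j U \<in> S (blk j)) \<longrightarrow>
       (\<forall>i<M. generic_for (S i) (\<lambda>j. column j U) {j. blk j = i}) \<longrightarrow>
       row_selection P \<longrightarrow>
       CARD('r) \<ge> rank U \<longrightarrow>
       rank (P ** U) = rank U \<longrightarrow>
       indep_subspaces M (\<lambda>i. (\<lambda>x. P *v x) ` S i))"

end

theory Submission
  imports Defs
begin

lemma mv_axis_col:
  fixes U :: "'k::field^'n^'m"
  shows "U *v axis j 1 = column j U"
  by (simp add: vec_eq_iff matrix_vector_mult_def column_def axis_def if_distrib cong: if_cong)

lemma ite01_mult: "(if a then (1::'k::field) else 0) * b = (if a then b else 0)"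
  by simp

lemma sel_entry:
  fixes P :: "'k::field^'m^'r"
  assumes "\<forall>i. P $ i = axis (\<sigma> i) 1"
  shows "P $ i $ k = (if k = \<sigma> i then 1 else 0)"
  using assms by (simp add: axis_def)

lemma sel_apply:
  fixes P :: "'k::field^'m^'r"
  assumes "\<forall>i. P $ i = axis (\<sigma> i) 1"
  shows "(P *v x) $ i = x $ (\<sigma> i)"
proof -
  have "(P *v x) $ i = (\<Sum>j\<in>UNIV. if j = \<sigma> i then x $ j else 0)"
    unfolding matrix_vector_mult_def by (simp add: sel_entry[OF assms] ite01_mult)
  then show ?thesis by simp
qed

lemma sel_row:
  fixes P :: "'k::field^'m^'r" and U :: "'k^'n^'m"
  assumes "\<forall>i. P $ i = axis (\<sigma> i) 1"
  shows "row i (P ** U) = row (\<sigma> i) U"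
proof -
  have "(P ** U) $ i $ l = (\<Sum>j\<in>UNIV. if j = \<sigma> i then U $ j $ l else 0)" for l
    unfolding matrix_matrix_mult_def by (simp add: sel_entry[OF assms] ite01_mult)
  then show ?thesis by (simp add: vec_eq_iff row_def)
qed

lemma kernel:
  fixes P :: "'k::field^'m^'r" and U :: "'k^'n^'m"
  assumes sel: "\<forall>i. P $ i = axis (\<sigma> i) 1"
    and rk: "rank (P ** U) = rank U"
    and z: "P *v (U *v y) = 0"
  shows "U *v y = 0"
proof -
  define T where "T = {r::'k^'n. (\<Sum>k\<in>UNIV. r$k * y$k) = 0}"
  have subT: "vec.subspace T"
    unfolding vec.subspace_def T_def
    by (auto simp: sum.distrib distrib_right mult.assoc sum_distrib_left[symmetric])
  have sub: "rows (P ** U) \<subseteq> rows U"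
    using sel_row[OF sel] by (auto simp: rows_def)
  have "vec.span (rows (P ** U)) = vec.span (rows U)"
    using vec.dim_eq_span[OF sub] rk by (simp add: row_rank_def_gen)
  have inT: "rows (P ** U) \<subseteq> T"
  proof
    fix r assume "r \<in> rows (P ** U)"
    then obtain i where r: "r = row i (P ** U)" by (auto simp: rows_def)
    have "(U *v y) $ (\<sigma> i) = 0" using sel_apply[OF sel, of "U *v y" i] z by simp
    then show "r \<in> T" unfolding r sel_row[OF sel] T_def
      by (simp add: row_def matrix_vector_mult_def)
  qed
  have "rows U \<subseteq> T"
    using vec.span_minimal[OF inT subT] \<open>vec.span (rows (P ** U)) = vec.span (rows U)\<close>
      vec.span_superset[of "rows U"] by blast
  then show ?thesis
    by (force simp: vec_eq_iff rows_def T_def row_def matrix_vector_mult_def)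
qed

lemma main:
  fixes S :: "nat \<Rightarrow> ('k::field^'m) set" and U :: "'k^'n^'m" and P :: "'k^'m^'r"
  assumes subs: "\<forall>i<M. vec.subspace (S i)"
    and ind: "indep_subspaces M S"
    and gen: "\<forall>i<M. generic_for (S i) (\<lambda>j. column j U) {j. blk j = i}"
    and rs: "row_selection P"
    and rk: "rank (P ** U) = rank U"
  shows "indep_subspaces M (\<lambda>i. (\<lambda>x. P *v x) ` S i)"
proof -
  obtain \<sigma> where sel: "\<forall>i. P $ i = axis (\<sigma> i) 1" using rs by (auto simp: row_selection_def)
  define W where "W = vec.span (\<Union>i<M. S i)"
  have subR: "vec.subspace (range ((*v) U))"
    using vec.subspace_image[OF vec.subspace_UNIV] by simp
  have Si: "S i \<subseteq> range ((*v) U)" if "i < M" for i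
  proof -
    have g: "generic_for (S i) (\<lambda>j. column j U) {j. blk j = i}" using gen that by auto
    then have "finite {j. blk j = i}" "vec.dim (S i) \<le> card {j. blk j = i}"
      by (auto simp: generic_for_def)
    then obtain K where K: "K \<subseteq> {j. blk j = i}" "card K = vec.dim (S i)"
      using obtain_subset_with_card_n by metis
    then have "vec.span ((\<lambda>j. column j U) ` K) = S i" using g by (auto simp: generic_for_def)
    moreover have "(\<lambda>j. column j U) ` K \<subseteq> range ((*v) U)"
      by (auto simp: mv_axis_col[symmetric])
    ultimately show ?thesis using vec.span_minimal[OF _ subR] by blast
  qed
  have WR: "W \<subseteq> range ((*v) U)"
    unfolding W_def using Si by (intro vec.span_minimal[OF _ subR]) auto
  have inj: "inj_on ((*v) P) W"
  proof (rule inj_onI)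
    fix a b assume ab: "a \<in> W" "b \<in> W" "P *v a = P *v b"
    have "a - b \<in> W" unfolding W_def using ab(1,2) unfolding W_def by (rule vec.span_diff)
    then obtain y where y: "a - b = U *v y" using WR by auto
    have "P *v (U *v y) = 0" unfolding y[symmetric] using ab(3)
      by (simp add: matrix_vector_mult_diff_distrib)
    then have "U *v y = 0" using kernel[OF sel rk] by blast
    then show "a = b" using y by simp
  qed
  have lin: "Vector_Spaces.linear (*s) (*s) ((*v) P)" by simp
  have "vec.dim (vec.span (\<Union>i<M. (*v) P ` S i)) = vec.dim (vec.span (\<Union>i<M. S i))"
  proof -
    have "vec.span (\<Union>i<M. (*v) P ` S i) = (*v) P ` W"
      unfolding W_def image_UN[symmetric] vec.span_image ..
    moreover have "vec.dim ((*v) P ` W) = vec.dim W"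
    proof -
      have "vec.span W = W" unfolding W_def by (rule vec.span_span)
      then show ?thesis using vec.dim_image_eq[OF lin, of W] inj by metis
    qed
    ultimately show ?thesis unfolding W_def by simp
  qed
  also have "\<dots> = (\<Sum>i<M. vec.dim (S i))" using ind by (simp add: indep_subspaces_def)
  also have "\<dots> = (\<Sum>i<M. vec.dim ((*v) P ` S i))"
  proof (rule sum.cong)
    fix i assume "i \<in> {..<M}"
    then have "vec.span (S i) \<subseteq> W" unfolding W_def by (intro vec.span_mono) auto
    then show "vec.dim (S i) = vec.dim ((*v) P ` S i)"
      using vec.dim_image_eq[OF lin, of "S i"] inj_on_subset[OF inj] by simp
  qed simp
  finally show ?thesis by (simp add: indep_subspaces_def)
qed

theorem lemma3:
  shows "lemma3_claim TYPE(real) TYPE('m::finite) TYPE('n::finite) TYPE('r::finite)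
       \<and> lemma3_claim TYPE(complex) TYPE('m::finite) TYPE('n::finite) TYPE('r::finite)"
  unfolding lemma3_claim_def
  by (intro conjI allI impI; rule main; assumption)

end
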